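(* For every $\alpha>0$, the essential norm of the generalized Alexander operator $C_{g_0}:\mathcal{B}_\alpha^0\to\mathcal{B}_\alpha^0$ is $0$.
   Context: $\mathbb{D}=\{z\in\mathbb{C}:|z|<1\}$. For $\alpha>0$, the $\alpha$-Bloch space $\mathcal{B}_\alpha$ is the space of analytic functions $f$ on $\mathbb{D}$ with $\|f\|_{\mathcal{B}_\alpha}:=\sup_{z\in\mathbb{D}}(1-|z|^2)^\alpha|f'(z)|<\infty$. $\mathcal{B}_\alpha^0=\{f\in\mathcal{B}_\alpha: f(0)=0\}$, normed by $\|\cdot\|_{\mathcal{B}_\alpha}$ (a Banach space). Let $g_0(w)=\sum_{j=1}^k a_j+h(w)$, where $k\ge1$, $a_j\in\mathbb{C}$ with $|a_j|>0$, and $h$ is a bounded analytic function on $\mathbb{D}$. The generalized Alexander operator is $C_{g_0}(f)(z)=\int_0^z\frac{f(w)g_0(w)}{w}\,dw$. The essential norm of a bounded operator $T:X\to Y$ between Banach spaces is $\|T\|_e=\inf\{\|T+K\|: K:X\to Y \text{ compact}\}$, $\|\cdot\|$ the operator norm. *)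

theory Defs
  imports "HOL-Complex_Analysis.Complex_Analysis"
begin

definition bloch_norm :: "real \<Rightarrow> (complex \<Rightarrow> complex) \<Rightarrow> ereal" where
  "bloch_norm \<alpha> f = (SUP z\<in>ball 0 1. ereal ((1 - (cmod z)\<^sup>2) powr \<alpha> * cmod (deriv f z)))"

definition bloch0 :: "real \<Rightarrow> (complex \<Rightarrow> complex) set" where
  "bloch0 \<alpha> = {f. f holomorphic_on ball 0 1 \<and> bloch_norm \<alpha> f < \<infinity> \<and> f 0 = 0}"

definition op_norm :: "real \<Rightarrow> ((complex \<Rightarrow> complex) \<Rightarrow> (complex \<Rightarrow> complex)) \<Rightarrow> ereal" where
  "op_norm \<alpha> T = (SUP f\<in>{f\<in>bloch0 \<alpha>. bloch_norm \<alpha> f \<le> 1}. bloch_norm \<alpha> (T f))"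

definition linear_op :: "real \<Rightarrow> ((complex \<Rightarrow> complex) \<Rightarrow> (complex \<Rightarrow> complex)) \<Rightarrow> bool" where
  "linear_op \<alpha> K \<longleftrightarrow> (\<forall>f\<in>bloch0 \<alpha>. K f \<in> bloch0 \<alpha>) \<and>
     (\<forall>f\<in>bloch0 \<alpha>. \<forall>g\<in>bloch0 \<alpha>. K (\<lambda>z. f z + g z) = (\<lambda>z. K f z + K g z)) \<and>
     (\<forall>f\<in>bloch0 \<alpha>. \<forall>c. K (\<lambda>z. c * f z) = (\<lambda>z. c * K f z))"

definition compact_op :: "real \<Rightarrow> ((complex \<Rightarrow> complex) \<Rightarrow> (complex \<Rightarrow> complex)) \<Rightarrow> bool" where
  "compact_op \<alpha> K \<longleftrightarrow> linear_op \<alpha> K \<and>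
     (\<forall>F :: nat \<Rightarrow> complex \<Rightarrow> complex. (\<forall>n. F n \<in> bloch0 \<alpha>) \<longrightarrow>
        (\<exists>M::real. \<forall>n. bloch_norm \<alpha> (F n) \<le> ereal M) \<longrightarrow>
        (\<exists>r g. strict_mono r \<and> g \<in> bloch0 \<alpha> \<and>
           ((\<lambda>n. bloch_norm \<alpha> (\<lambda>z. K (F (r n)) z - g z)) \<longlongrightarrow> 0) sequentially))"

definition ess_norm :: "real \<Rightarrow> ((complex \<Rightarrow> complex) \<Rightarrow> (complex \<Rightarrow> complex)) \<Rightarrow> ereal" where
  "ess_norm \<alpha> T = (INF K\<in>{K. compact_op \<alpha> K}. op_norm \<alpha> (\<lambda>f z. T f z + K f z))"

definition alexander_op :: "(complex \<Rightarrow> complex) \<Rightarrow> (complex \<Rightarrow> complex) \<Rightarrow> complex \<Rightarrow> complex" where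
  "alexander_op g f = (\<lambda>z. contour_integral (linepath 0 z) (\<lambda>w. f w * g w / w))"

end

theory Submission
  imports Defs
begin


definition qf :: "(complex\<Rightarrow>complex) \<Rightarrow> (complex\<Rightarrow>complex) \<Rightarrow> complex \<Rightarrow> complex" where
 "qf g f w = (if w = 0 then deriv f 0 * g 0 else f w * g w / w)"

definition Kop :: "(complex\<Rightarrow>complex) \<Rightarrow> (complex\<Rightarrow>complex) \<Rightarrow> complex \<Rightarrow> complex" where
 "Kop g f = (\<lambda>z. if z \<in> ball 0 1 then - alexander_op g f z else 0)"

lemma qf_holo:
  assumes g: "g holomorphic_on ball 0 1" and f: "f holomorphic_on ball 0 1" and f0: "f 0 = 0"
  shows "qf g f holomorphic_on ball 0 1"
proof -
  have "(\<lambda>z. if z = 0 then deriv f 0 else (f z - f 0) / (z - 0)) holomorphic_on ball 0 1"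
    by (rule pole_lemma[OF f]) auto
  then have "(\<lambda>z. (if z = 0 then deriv f 0 else (f z - f 0) / (z - 0)) * g z) holomorphic_on ball 0 1"
    using g by (intro holomorphic_intros) auto
  moreover have "(\<lambda>z. (if z = 0 then deriv f 0 else (f z - f 0) / (z - 0)) * g z) = qf g f"
    by (rule ext) (simp add: qf_def f0)
  ultimately show ?thesis by simp
qed

lemma alex_has:
  assumes g: "g holomorphic_on ball 0 1" and f: "f holomorphic_on ball 0 1" and f0: "f 0 = 0"
  obtains Q where "\<And>z. z \<in> ball 0 1 \<Longrightarrow> (Q has_field_derivative qf g f z) (at z)"
    "\<And>z. z \<in> ball 0 1 \<Longrightarrow> ((\<lambda>w. f w * g w / w) has_contour_integral (Q z - Q 0)) (linepath 0 z)"
proof -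
  obtain Q where Q: "\<And>x. x \<in> ball 0 1 \<Longrightarrow> (Q has_field_derivative qf g f x) (at x within ball 0 1)"
    using holomorphic_convex_primitive'[OF convex_ball open_ball qf_holo[OF g f f0]] by blast
  have Q': "(Q has_field_derivative qf g f x) (at x)" if "x \<in> ball 0 1" for x
    using Q[OF that] at_within_open[OF that open_ball] by simp
  have "((\<lambda>w. f w * g w / w) has_contour_integral (Q z - Q 0)) (linepath 0 z)" if z: "z \<in> ball 0 1" for z
  proof -
    have sub: "path_image (linepath 0 z) \<subseteq> ball 0 1"
      using z convex_ball[of "0::complex" 1, unfolded convex_contains_segment] by auto
    have "(qf g f has_contour_integral (Q (pathfinish (linepath 0 z)) - Q (pathstart (linepath 0 z)))) (linepath 0 z)"
      by (rule contour_integral_primitive[OF Q valid_path_linepath sub])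
    then have "(qf g f has_contour_integral (Q z - Q 0)) (linepath 0 z)" by simp
    then have I: "((\<lambda>x. qf g f (linepath 0 z x) * (z - 0)) has_integral (Q z - Q 0)) {0..1}"
      using has_contour_integral_linepath by blast
    have "((\<lambda>x. f (linepath 0 z x) * g (linepath 0 z x) / (linepath 0 z x) * (z - 0)) has_integral (Q z - Q 0)) {0..1}"
    proof (rule has_integral_spike_finite[OF _ _ I])
      show "finite {0::real}" by simp
      fix x assume "x \<in> {0..1} - {0::real}"
      then show "f (linepath 0 z x) * g (linepath 0 z x) / linepath 0 z x * (z - 0) = qf g f (linepath 0 z x) * (z - 0)"
        by (auto simp: qf_def linepath_def)
    qed
    then show ?thesis using has_contour_integral_linepath by blast
  qed
  then show ?thesis using that[OF Q'] by metis
qed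

lemma Kop_props:
  assumes g: "g holomorphic_on ball 0 1" and f: "f holomorphic_on ball 0 1" and f0: "f 0 = 0"
  shows "\<And>z. z \<in> ball 0 1 \<Longrightarrow> ((\<lambda>w. f w * g w / w) has_contour_integral alexander_op g f z) (linepath 0 z)"
    and "\<And>z. z \<in> ball 0 1 \<Longrightarrow> (Kop g f has_field_derivative - qf g f z) (at z)"
    and "Kop g f holomorphic_on ball 0 1"
    and "Kop g f 0 = 0"
    and "\<And>z. z \<in> ball 0 1 \<Longrightarrow> deriv (Kop g f) z = - qf g f z"
proof -
  obtain Q where Q: "\<And>z. z \<in> ball 0 1 \<Longrightarrow> (Q has_field_derivative qf g f z) (at z)"
    and I: "\<And>z. z \<in> ball 0 1 \<Longrightarrow> ((\<lambda>w. f w * g w / w) has_contour_integral (Q z - Q 0)) (linepath 0 z)"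
    using alex_has[OF g f f0] by blast
  have A: "alexander_op g f z = Q z - Q 0" if "z \<in> ball 0 1" for z
    unfolding alexander_op_def using contour_integral_unique[OF I[OF that]] .
  show I': "((\<lambda>w. f w * g w / w) has_contour_integral alexander_op g f z) (linepath 0 z)" if "z \<in> ball 0 1" for z
    using I[OF that] A[OF that] by simp
  show D: "(Kop g f has_field_derivative - qf g f z) (at z)" if z: "z \<in> ball 0 1" for z
  proof (rule has_field_derivative_transform_within_open[OF _ open_ball z])
    show "((\<lambda>z. - (Q z - Q 0)) has_field_derivative - qf g f z) (at z)"
      using Q[OF z] by (auto intro!: derivative_eq_intros)
    show "- (Q x - Q 0) = Kop g f x" if "x \<in> ball 0 1" for x
      using A[OF that] that by (simp add: Kop_def)
  qed
  show "Kop g f holomorphic_on ball 0 1"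
    using D by (meson field_differentiable_def holomorphic_on_open open_ball)
  show "Kop g f 0 = 0"
    by (simp add: Kop_def alexander_op_def)
  show "deriv (Kop g f) z = - qf g f z" if "z \<in> ball 0 1" for z
    using D[OF that] by (rule DERIV_imp_deriv)
qed

lemma Kop_lin:
  assumes g: "g holomorphic_on ball 0 1" and f1: "f1 holomorphic_on ball 0 1" and f10: "f1 0 = 0"
    and f2: "f2 holomorphic_on ball 0 1" and f20: "f2 0 = 0"
  shows "Kop g (\<lambda>z. f1 z + f2 z) = (\<lambda>z. Kop g f1 z + Kop g f2 z)"
    and "Kop g (\<lambda>z. f1 z - f2 z) = (\<lambda>z. Kop g f1 z - Kop g f2 z)"
    and "Kop g (\<lambda>z. c * f1 z) = (\<lambda>z. c * Kop g f1 z)"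
proof -
  note a1 = Kop_props(1)[OF g f1 f10] and a2 = Kop_props(1)[OF g f2 f20]
  show "Kop g (\<lambda>z. f1 z + f2 z) = (\<lambda>z. Kop g f1 z + Kop g f2 z)"
  proof (rule ext)
    fix z
    show "Kop g (\<lambda>z. f1 z + f2 z) z = Kop g f1 z + Kop g f2 z"
    proof (cases "z \<in> ball 0 1")
      case True
      have "((\<lambda>w. (f1 w + f2 w) * g w / w) has_contour_integral (alexander_op g f1 z + alexander_op g f2 z)) (linepath 0 z)"
        using has_contour_integral_add[OF a1[OF True] a2[OF True]] by (simp add: distrib_right add_divide_distrib)
      then have "alexander_op g (\<lambda>z. f1 z + f2 z) z = alexander_op g f1 z + alexander_op g f2 z"
        unfolding alexander_op_def[of g "\<lambda>z. f1 z + f2 z"] by (rule contour_integral_unique)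
      then show ?thesis using True by (simp add: Kop_def)
    qed (simp add: Kop_def)
  qed
  show "Kop g (\<lambda>z. f1 z - f2 z) = (\<lambda>z. Kop g f1 z - Kop g f2 z)"
  proof (rule ext)
    fix z
    show "Kop g (\<lambda>z. f1 z - f2 z) z = Kop g f1 z - Kop g f2 z"
    proof (cases "z \<in> ball 0 1")
      case True
      have "((\<lambda>w. (f1 w - f2 w) * g w / w) has_contour_integral (alexander_op g f1 z - alexander_op g f2 z)) (linepath 0 z)"
        using has_contour_integral_diff[OF a1[OF True] a2[OF True]] by (simp add: left_diff_distrib diff_divide_distrib)
      then have "alexander_op g (\<lambda>z. f1 z - f2 z) z = alexander_op g f1 z - alexander_op g f2 z"
        unfolding alexander_op_def[of g "\<lambda>z. f1 z - f2 z"] by (rule contour_integral_unique)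
      then show ?thesis using True by (simp add: Kop_def)
    qed (simp add: Kop_def)
  qed
  show "Kop g (\<lambda>z. c * f1 z) = (\<lambda>z. c * Kop g f1 z)"
  proof (rule ext)
    fix z
    show "Kop g (\<lambda>z. c * f1 z) z = c * Kop g f1 z"
    proof (cases "z \<in> ball 0 1")
      case True
      have "((\<lambda>w. (c * f1 w) * g w / w) has_contour_integral (c * alexander_op g f1 z)) (linepath 0 z)"
        using has_contour_integral_lmul[OF a1[OF True], of c] by (simp add: mult.assoc)
      then have "alexander_op g (\<lambda>z. c * f1 z) z = c * alexander_op g f1 z"
        unfolding alexander_op_def[of g "\<lambda>z. c * f1 z"] by (rule contour_integral_unique)
      then show ?thesis using True by (simp add: Kop_def)
    qed (simp add: Kop_def)
  qed
qed



lemma growth_bound: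
  fixes f :: "complex \<Rightarrow> complex" and \<alpha> \<beta> M :: real
  assumes a: "\<alpha> > 0" and b: "\<beta> > 0" "\<alpha> \<le> \<beta> + 1"
    and f: "f holomorphic_on ball 0 1" and f0: "f 0 = 0"
    and bd: "\<And>z. z \<in> ball 0 1 \<Longrightarrow> (1 - (cmod z)\<^sup>2) powr \<alpha> * cmod (deriv f z) \<le> M"
    and z: "z \<in> ball 0 1"
  shows "cmod (f z) \<le> (M / \<beta>) * (1 - cmod z) powr (- \<beta>)"
proof -
  have M0: "M \<ge> 0" using bd[of 0] by simp (meson norm_ge_zero order_trans)
  show ?thesis
  proof (cases "z = 0")
    case True then show ?thesis using M0 b f0 by simp
  next
    case False
    define r where "r = cmod z"
    define e where "e = z / of_real r"
    have r: "0 < r" "r < 1" using False z by (auto simp: r_def)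
    have e1: "cmod e = 1" using r by (simp add: e_def norm_divide r_def)
    have ze: "z = of_real r * e" using r by (simp add: e_def)
    have inD: "of_real t * e \<in> ball 0 1" if "0 \<le> t" "t < 1" for t
      using that e1 by (simp add: norm_mult)
    define u where "u = (\<lambda>t::real. f (of_real t * e))"
    define \<phi> where "\<phi> = (\<lambda>t::real. (M / \<beta>) * (1 - t) powr (- \<beta>))"
    have "cmod (u r - u 0) \<le> \<phi> r - \<phi> 0"
    proof (rule differentiable_bound_general[where f' = "\<lambda>t. deriv f (of_real t * e) * e"
          and \<phi>' = "\<lambda>t. M * (1 - t) powr (- \<beta> - 1)"])
      show "0 < r" by fact
      have "continuous_on (ball 0 1) f" using f holomorphic_on_imp_continuous_on by blast
      moreover have "(\<lambda>t. of_real t * e) ` {0..r} \<subseteq> ball 0 1" using inD r by auto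
      ultimately have c2: "continuous_on ((\<lambda>t. of_real t * e) ` {0..r}) f"
        by (rule continuous_on_subset)
      have c1: "continuous_on {0..r} (\<lambda>t. complex_of_real t * e)"
        by (intro continuous_intros)
      show "continuous_on {0..r} u"
        using continuous_on_compose[OF c1 c2] by (simp add: o_def u_def)
      show "continuous_on {0..r} \<phi>" unfolding \<phi>_def using r
        by (intro continuous_intros) auto
      fix t assume t: "0 < t" "t < r"
      have tD: "of_real t * e \<in> ball 0 1" using inD t r by auto
      have df: "(f has_field_derivative deriv f (of_real t * e)) (at (of_real t * e))"
        using f tD by (meson DERIV_deriv_iff_field_differentiable holomorphic_on_imp_differentiable_at open_ball)
      have "((\<lambda>w. f (w * e)) has_field_derivative deriv f (of_real t * e) * e) (at (of_real t))"
      proof -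
        have d1: "((\<lambda>w. w * e) has_field_derivative e) (at (of_real t))"
          by (auto intro!: derivative_eq_intros)
        show ?thesis using DERIV_chain'[OF d1, of f] df by simp
      qed
      then show "(u has_vector_derivative deriv f (of_real t * e) * e) (at t)"
        unfolding u_def by (rule has_vector_derivative_real_field)
      have "((\<lambda>t. (M / \<beta>) * (1 - t) powr (- \<beta>)) has_real_derivative (M / \<beta>) * ((- \<beta>) * (1 - t) powr (- \<beta> - 1) * (-1))) (at t)"
        using t r by (auto intro!: derivative_eq_intros)
      moreover have "(M / \<beta>) * ((- \<beta>) * (1 - t) powr (- \<beta> - 1) * (-1)) = M * (1 - t) powr (- \<beta> - 1)"
        using b by simp
      ultimately show "(\<phi> has_vector_derivative M * (1 - t) powr (- \<beta> - 1)) (at t)"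
        unfolding \<phi>_def by (simp add: has_real_derivative_iff_has_vector_derivative)
      have n: "cmod (of_real t * e) = t" using t e1 by (simp add: norm_mult)
      have w: "(1 - t\<^sup>2) powr \<alpha> * cmod (deriv f (of_real t * e)) \<le> M"
        using bd[OF tD] n by simp
      have t1: "0 < 1 - t" "1 - t \<le> 1" using t r by auto
      have "(1 - t) powr (\<beta> + 1) \<le> (1 - t) powr \<alpha>"
        using powr_mono'[OF b(2)] t1 by simp
      also have "\<dots> \<le> (1 - t\<^sup>2) powr \<alpha>"
        using t r a by (intro powr_mono2) (auto simp: power2_eq_square)
      finally have p: "(1 - t) powr (\<beta> + 1) \<le> (1 - t\<^sup>2) powr \<alpha>" .
      have pp: "(1 - t) powr (\<beta> + 1) > 0" using t1 by simp
      have "(1 - t) powr (\<beta> + 1) * cmod (deriv f (of_real t * e)) \<le> M"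
        using w p by (meson mult_right_mono norm_ge_zero order_trans)
      then have "cmod (deriv f (of_real t * e)) \<le> M / (1 - t) powr (\<beta> + 1)"
        using pp by (simp add: field_simps)
      also have "\<dots> = M * (1 - t) powr (- (\<beta> + 1))"
        by (simp only: powr_minus divide_inverse)
      also have "- (\<beta> + 1) = - \<beta> - 1" by simp
      finally show "cmod (deriv f (of_real t * e) * e) \<le> M * (1 - t) powr (- \<beta> - 1)"
        using e1 by (simp add: norm_mult)
    qed
    moreover have "u r = f z" "u 0 = 0" using ze f0 by (auto simp: u_def)
    moreover have "\<phi> 0 \<ge> 0" using M0 b by (simp add: \<phi>_def)
    ultimately show ?thesis by (simp add: \<phi>_def r_def)
  qed
qed



lemma tail_bound:
  fixes \<alpha> \<beta> C G :: real
  assumes a: "\<alpha> > 0" and b: "\<beta> > 0" "\<beta> < \<alpha>" and C: "C \<ge> 0" and G: "G \<ge> 0"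
    and fb: "\<And>z. z \<in> ball 0 1 \<Longrightarrow> cmod (f z) \<le> C * (1 - cmod z) powr (- \<beta>)"
    and gb: "\<And>z. z \<in> ball 0 1 \<Longrightarrow> cmod (g z) \<le> G"
    and z: "z \<in> ball 0 1" and zh: "cmod z \<ge> 1/2"
  shows "(1 - (cmod z)\<^sup>2) powr \<alpha> * cmod (qf g f z) \<le> 2 powr (\<alpha> + 1) * C * G * (1 - cmod z) powr (\<alpha> - \<beta>)"
proof -
  define s where "s = cmod z"
  have s: "1/2 \<le> s" "s < 1" using z zh by (auto simp: s_def)
  have z0: "z \<noteq> 0" using zh by auto
  have q: "cmod (qf g f z) = cmod (f z) * cmod (g z) / s"
    using z0 by (simp add: qf_def norm_mult norm_divide s_def)
  have "cmod (f z) * cmod (g z) \<le> (C * (1 - s) powr (- \<beta>)) * G"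
    using fb[OF z] gb[OF z] C by (intro mult_mono) (auto simp: s_def)
  then have "cmod (qf g f z) \<le> (C * (1 - s) powr (- \<beta>)) * G / s"
    unfolding q using s by (intro divide_right_mono) auto
  also have "\<dots> \<le> 2 * ((C * (1 - s) powr (- \<beta>)) * G)"
  proof -
    define X where "X = (C * (1 - s) powr (- \<beta>)) * G"
    have X0: "0 \<le> X" using C G by (simp add: X_def)
    have "X \<le> X * (2 * s)" using X0 s mult_left_mono[of 1 "2 * s" X] by simp
    then have "X / s \<le> 2 * X" using s by (simp add: divide_le_eq mult_ac)
    then show ?thesis by (simp add: X_def)
  qed
  finally have qb: "cmod (qf g f z) \<le> 2 * (C * (1 - s) powr (- \<beta>) * G)" .
  have "(1 - s\<^sup>2) powr \<alpha> \<le> (2 * (1 - s)) powr \<alpha>"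
  proof (rule powr_mono2)
    show "0 \<le> \<alpha>" using a by simp
    show "0 \<le> 1 - s\<^sup>2" using s power_le_one[of s 2] by simp
    have "(1 - s)\<^sup>2 = 1 - 2 * s + s\<^sup>2" by (simp add: power2_eq_square algebra_simps)
    moreover have "(1 - s)\<^sup>2 \<ge> 0" by simp
    ultimately show "1 - s\<^sup>2 \<le> 2 * (1 - s)" by (smt (verit))
  qed
  also have "\<dots> = 2 powr \<alpha> * (1 - s) powr \<alpha>"
    using s powr_mult[of 2 "1 - s" \<alpha>] by simp
  finally have wb: "(1 - s\<^sup>2) powr \<alpha> \<le> 2 powr \<alpha> * (1 - s) powr \<alpha>" .
  have "(1 - s\<^sup>2) powr \<alpha> * cmod (qf g f z) \<le> (2 powr \<alpha> * (1 - s) powr \<alpha>) * (2 * (C * (1 - s) powr (- \<beta>) * G))"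
    using wb qb by (intro mult_mono) auto
  also have "\<dots> = 2 powr (\<alpha> + 1) * C * G * ((1 - s) powr \<alpha> * (1 - s) powr (- \<beta>))"
    by (simp add: powr_add)
  also have "(1 - s) powr \<alpha> * (1 - s) powr (- \<beta>) = (1 - s) powr (\<alpha> - \<beta>)"
    by (simp add: powr_add[symmetric])
  finally show ?thesis by (simp add: s_def)
qed

lemma Kop_finite:
  fixes \<alpha> \<beta> C G :: real
  assumes a: "\<alpha> > 0" and b: "\<beta> > 0" "\<beta> < \<alpha>" and C: "C \<ge> 0" and G: "G \<ge> 0"
    and f: "f holomorphic_on ball 0 1" and f0: "f 0 = 0"
    and g: "g holomorphic_on ball 0 1"
    and fb: "\<And>z. z \<in> ball 0 1 \<Longrightarrow> cmod (f z) \<le> C * (1 - cmod z) powr (- \<beta>)"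
    and gb: "\<And>z. z \<in> ball 0 1 \<Longrightarrow> cmod (g z) \<le> G"
  shows "\<exists>B. \<forall>z\<in>ball 0 1. (1 - (cmod z)\<^sup>2) powr \<alpha> * cmod (qf g f z) \<le> B"
proof -
  have "continuous_on (cball 0 (1/2)) (qf g f)"
  proof (rule continuous_on_subset)
    show "continuous_on (ball 0 1) (qf g f)"
      using qf_holo[OF g f f0] by (rule holomorphic_on_imp_continuous_on)
    show "cball 0 (1/2) \<subseteq> (ball 0 1 :: complex set)" by (auto simp: subset_iff)
  qed
  then have "bounded (qf g f ` cball 0 (1/2))"
    by (intro compact_imp_bounded compact_continuous_image) auto
  then obtain B1 where B1: "\<And>z. z \<in> cball 0 (1/2) \<Longrightarrow> cmod (qf g f z) \<le> B1"
    unfolding bounded_iff by blast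
  show ?thesis
  proof (intro exI ballI)
    fix z :: complex assume z: "z \<in> ball 0 1"
    show "(1 - (cmod z)\<^sup>2) powr \<alpha> * cmod (qf g f z) \<le> max B1 (2 powr (\<alpha> + 1) * C * G)"
    proof (cases "cmod z \<ge> 1/2")
      case True
      have "(1 - (cmod z)\<^sup>2) powr \<alpha> * cmod (qf g f z) \<le> 2 powr (\<alpha> + 1) * C * G * (1 - cmod z) powr (\<alpha> - \<beta>)"
        by (rule tail_bound[OF a b C G fb gb z True])
      also have "\<dots> \<le> 2 powr (\<alpha> + 1) * C * G * 1"
        using z b C G by (intro mult_left_mono powr_le1) auto
      finally show ?thesis by simp
    next
      case False
      have w1: "(1 - (cmod z)\<^sup>2) powr \<alpha> \<le> 1" using z a
        by (intro powr_le1) (auto simp: abs_square_le_1 power_le_one)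
      have "(1 - (cmod z)\<^sup>2) powr \<alpha> * cmod (qf g f z) \<le> 1 * cmod (qf g f z)"
        using w1 by (intro mult_right_mono) auto
      also have "\<dots> \<le> B1" using B1[of z] False by simp
      finally show ?thesis by simp
    qed
  qed
qed



lemma Kop_conv:
  fixes \<alpha> \<beta> C G \<epsilon> :: real and d :: "nat \<Rightarrow> complex \<Rightarrow> complex"
  assumes a: "\<alpha> > 0" and b: "\<beta> > 0" "\<beta> < \<alpha>" and C: "C \<ge> 0" and G: "G \<ge> 0"
    and gb: "\<And>z. z \<in> ball 0 1 \<Longrightarrow> cmod (g z) \<le> G"
    and d: "\<And>n. d n holomorphic_on ball 0 1" and d0: "\<And>n. d n 0 = 0"
    and db: "\<And>n z. z \<in> ball 0 1 \<Longrightarrow> cmod (d n z) \<le> C * (1 - cmod z) powr (- \<beta>)"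
    and du: "\<And>\<rho> \<eta>. \<rho> < 1 \<Longrightarrow> \<eta> > 0 \<Longrightarrow> eventually (\<lambda>n. \<forall>u\<in>cball 0 \<rho>. cmod (d n u) < \<eta>) sequentially"
    and e: "\<epsilon> > 0"
  shows "eventually (\<lambda>n. \<forall>z\<in>ball 0 1. (1 - (cmod z)\<^sup>2) powr \<alpha> * cmod (qf g (d n) z) \<le> \<epsilon>) sequentially"
proof -
  define A where "A = 2 powr (\<alpha> + 1) * C * G"
  define \<gamma> where "\<gamma> = \<alpha> - \<beta>"
  define \<delta> where "\<delta> = (\<epsilon> / (A + 1)) powr (1 / \<gamma>)"
  define \<rho> where "\<rho> = max (1/2) (1 - \<delta>)"
  have A0: "A \<ge> 0" using C G by (simp add: A_def)
  have g0: "\<gamma> > 0" using b by (simp add: \<gamma>_def)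
  have de: "\<delta> > 0" using e A0 by (simp add: \<delta>_def)
  have \<rho>: "1/2 \<le> \<rho>" "\<rho> < 1" using de by (auto simp: \<rho>_def)
  have dg: "\<delta> powr \<gamma> = \<epsilon> / (A + 1)"
    using e A0 g0 by (simp add: \<delta>_def powr_powr)
  define \<rho>' where "\<rho>' = (1 + \<rho>) / 2"
  define r where "r = (1 - \<rho>) / 2"
  define \<eta> where "\<eta> = \<epsilon> * r / (G + 1)"
  have r: "r > 0" using \<rho> by (simp add: r_def)
  have \<rho>': "\<rho>' < 1" "\<rho> + r = \<rho>'" using \<rho> by (auto simp: \<rho>'_def r_def field_simps)
  have \<eta>: "\<eta> > 0" using e r G by (simp add: \<eta>_def)
  show ?thesis
    using du[OF \<rho>'(1) \<eta>]
  proof eventually_elim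
    case (elim n)
    then have H: "\<And>u. u \<in> cball 0 \<rho>' \<Longrightarrow> cmod (d n u) \<le> \<eta>" by (simp add: less_imp_le)
    have dd: "cmod (deriv (d n) w) \<le> \<eta> / r" if w: "w \<in> cball 0 \<rho>" for w
    proof -
      have sub: "cball w r \<subseteq> cball 0 \<rho>'"
      proof
        fix x assume "x \<in> cball w r"
        then have "cmod (x - w) \<le> r" by (simp add: dist_norm norm_minus_commute)
        moreover have "cmod x \<le> cmod w + cmod (x - w)" by (rule norm_triangle_sub)
        ultimately have "cmod x \<le> cmod w + r" by linarith
        then show "x \<in> cball 0 \<rho>'" using w \<rho>' by simp
      qed
      have sub2: "cball 0 \<rho>' \<subseteq> ball (0::complex) 1" using \<rho>' by (auto simp: subset_iff)
      have "cmod ((deriv ^^ 1) (d n) w) \<le> fact 1 * \<eta> / r ^ 1"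
      proof (rule Cauchy_inequality)
        have s1: "cball w r \<subseteq> ball 0 1" using sub sub2 by (rule order_trans)
        have s2: "ball w r \<subseteq> ball 0 1" using s1 ball_subset_cball by blast
        show "d n holomorphic_on ball w r"
          using d s2 by (rule holomorphic_on_subset)
        show "continuous_on (cball w r) (d n)"
          using holomorphic_on_subset[OF d s1] by (rule holomorphic_on_imp_continuous_on)
        show "0 < r" by fact
        fix x assume "cmod (w - x) = r"
        then have "x \<in> cball w r" by (simp add: dist_norm)
        then show "cmod (d n x) \<le> \<eta>" using H sub by blast
      qed
      then show ?thesis by simp
    qed
    have lip: "cmod (d n z) \<le> \<eta> / r * cmod z" if z: "z \<in> cball 0 \<rho>" for z
    proof -
      have "cmod (d n z - d n 0) \<le> \<eta> / r * cmod (z - 0)"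
      proof (rule field_differentiable_bound[of "cball 0 \<rho>" "d n" "deriv (d n)"])
        show "convex (cball (0::complex) \<rho>)" by simp
        fix x assume x: "x \<in> cball (0::complex) \<rho>"
        then have "x \<in> ball 0 1" using \<rho> by simp
        then have "(d n has_field_derivative deriv (d n) x) (at x)"
          using d by (meson DERIV_deriv_iff_field_differentiable holomorphic_on_imp_differentiable_at open_ball)
        then show "(d n has_field_derivative deriv (d n) x) (at x within cball 0 \<rho>)"
          by (rule has_field_derivative_at_within)
        show "cmod (deriv (d n) x) \<le> \<eta> / r" using dd x by blast
      qed (use z \<rho> in auto)
      then show ?thesis using d0 by simp
    qed
    show ?case
    proof
      fix z :: complex assume z: "z \<in> ball 0 1"
      show "(1 - (cmod z)\<^sup>2) powr \<alpha> * cmod (qf g (d n) z) \<le> \<epsilon>"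
      proof (cases "cmod z \<ge> \<rho>")
        case True
        have "(1 - (cmod z)\<^sup>2) powr \<alpha> * cmod (qf g (d n) z) \<le> A * (1 - cmod z) powr \<gamma>"
          unfolding A_def \<gamma>_def
          by (rule tail_bound[OF a b C G db gb z]) (use True \<rho> in auto)
        also have "\<dots> \<le> A * \<delta> powr \<gamma>"
          using True z g0 A0 by (intro mult_left_mono powr_mono2) (auto simp: \<rho>_def)
        also have "\<dots> = A * \<epsilon> / (A + 1)" by (simp add: dg)
        also have "\<dots> \<le> \<epsilon>" using A0 e by (simp add: field_simps)
        finally show ?thesis .
      next
        case False
        then have zc: "z \<in> cball 0 \<rho>" by simp
        have q: "cmod (qf g (d n) z) \<le> \<eta> / r * G"
        proof (cases "z = 0")
          case True
          have "cmod (deriv (d n) 0) * cmod (g 0) \<le> \<eta> / r * G"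
            using dd[of 0] gb[of 0] \<rho> \<eta> r by (intro mult_mono) auto
          then show ?thesis using True by (simp add: qf_def norm_mult)
        next
          case False
          have "cmod (qf g (d n) z) = cmod (d n z) * cmod (g z) / cmod z"
            using False by (simp add: qf_def norm_mult norm_divide)
          also have "\<dots> \<le> (\<eta> / r * cmod z) * G / cmod z"
            using lip[OF zc] gb[OF z] False \<eta> r
            by (intro divide_right_mono mult_mono) auto
          also have "\<dots> = \<eta> / r * G" using False by simp
          finally show ?thesis .
        qed
        have w1: "(1 - (cmod z)\<^sup>2) powr \<alpha> \<le> 1" using z a
          by (intro powr_le1) (auto simp: abs_square_le_1 power_le_one)
        have "(1 - (cmod z)\<^sup>2) powr \<alpha> * cmod (qf g (d n) z) \<le> 1 * (\<eta> / r * G)"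
          using w1 q by (intro mult_mono) auto
        also have "\<dots> = \<epsilon> * G / (G + 1)"
        proof -
          have "\<eta> / r = \<epsilon> / (G + 1)" using r by (simp add: \<eta>_def)
          then show ?thesis by simp
        qed
        also have "\<dots> \<le> \<epsilon>" using e G by (simp add: field_simps)
        finally show ?thesis .
      qed
    qed
  qed
qed



lemma bloch_norm_nonneg: "0 \<le> bloch_norm \<alpha> f"
proof -
  have "ereal ((1 - (cmod (0::complex))\<^sup>2) powr \<alpha> * cmod (deriv f 0)) \<le> bloch_norm \<alpha> f"
    unfolding bloch_norm_def by (rule SUP_upper) simp
  moreover have "0 \<le> ereal ((1 - (cmod (0::complex))\<^sup>2) powr \<alpha> * cmod (deriv f 0))" by simp
  ultimately show ?thesis by (rule order_trans[rotated])
qed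

lemma bloch_le_iff:
  "bloch_norm \<alpha> f \<le> ereal M \<longleftrightarrow> (\<forall>z\<in>ball 0 1. (1 - (cmod z)\<^sup>2) powr \<alpha> * cmod (deriv f z) \<le> M)"
  unfolding bloch_norm_def by (simp add: SUP_le_iff)

lemma bloch_Kop_le:
  assumes g: "g holomorphic_on ball 0 1" and f: "f holomorphic_on ball 0 1" and f0: "f 0 = 0"
    and B: "\<forall>z\<in>ball 0 1. (1 - (cmod z)\<^sup>2) powr \<alpha> * cmod (qf g f z) \<le> B"
  shows "bloch_norm \<alpha> (Kop g f) \<le> ereal B"
  unfolding bloch_le_iff using B Kop_props(5)[OF g f f0] by simp

lemma ereal_tendsto0:
  fixes X :: "nat \<Rightarrow> ereal"
  assumes "\<And>n. 0 \<le> X n" and "\<And>\<epsilon>. \<epsilon> > 0 \<Longrightarrow> eventually (\<lambda>n. X n \<le> ereal \<epsilon>) sequentially"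
  shows "X \<longlonglongrightarrow> 0"
proof (rule order_tendstoI)
  fix y :: ereal assume "y < 0"
  then have "\<forall>n. y < X n" using assms(1) less_le_trans by blast
  then show "eventually (\<lambda>n. y < X n) sequentially" by (rule always_eventually)
next
  fix y :: ereal assume "0 < y"
  then obtain z where z: "0 < ereal z" "ereal z < y" using ereal_dense2 by blast
  then have "z > 0" by simp
  from assms(2)[OF this] show "eventually (\<lambda>n. X n < y) sequentially"
    by eventually_elim (use z in auto)
qed

lemma Kop_compact:
  fixes \<alpha> \<beta> G :: real
  assumes a: "\<alpha> > 0" and b: "\<beta> > 0" "\<beta> < \<alpha>" "\<alpha> \<le> \<beta> + 1" and G: "G \<ge> 0"
    and g: "g holomorphic_on ball 0 1"
    and gb: "\<And>z. z \<in> ball 0 1 \<Longrightarrow> cmod (g z) \<le> G"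
  shows "compact_op \<alpha> (Kop g)"
proof -
  have in_bloch: "Kop g f \<in> bloch0 \<alpha>"
    if f: "f holomorphic_on ball 0 1" and f0: "f 0 = 0" and C: "C \<ge> 0"
      and fb: "\<And>z. z \<in> ball 0 1 \<Longrightarrow> cmod (f z) \<le> C * (1 - cmod z) powr (- \<beta>)" for f C
  proof -
    obtain B where B: "\<forall>z\<in>ball 0 1. (1 - (cmod z)\<^sup>2) powr \<alpha> * cmod (qf g f z) \<le> B"
      using Kop_finite[OF a b(1,2) C G f f0 g fb gb] by blast
    have "bloch_norm \<alpha> (Kop g f) \<le> ereal B" by (rule bloch_Kop_le[OF g f f0 B])
    then have "bloch_norm \<alpha> (Kop g f) < \<infinity>" by (rule order.strict_trans1) simp
    then show ?thesis using Kop_props(3,4)[OF g f f0] by (simp add: bloch0_def)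
  qed
  have growth: "cmod (f z) \<le> (M / \<beta>) * (1 - cmod z) powr (- \<beta>)"
    if f: "f \<in> bloch0 \<alpha>" and M: "bloch_norm \<alpha> f \<le> ereal M" and z: "z \<in> ball 0 1" for f M z
  proof (rule growth_bound[OF a b(1,3) _ _ _ z])
    show "f holomorphic_on ball 0 1" "f 0 = 0" using f by (auto simp: bloch0_def)
    show "\<And>z. z \<in> ball 0 1 \<Longrightarrow> (1 - (cmod z)\<^sup>2) powr \<alpha> * cmod (deriv f z) \<le> M"
      using M by (simp add: bloch_le_iff)
  qed
  have lin: "linear_op \<alpha> (Kop g)"
    unfolding linear_op_def
  proof (intro conjI ballI allI)
    fix f assume f: "f \<in> bloch0 \<alpha>"
    define M where "M = real_of_ereal (bloch_norm \<alpha> f)"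
    have "bloch_norm \<alpha> f < \<infinity>" using f by (simp add: bloch0_def)
    then have Mf: "bloch_norm \<alpha> f = ereal M"
      using bloch_norm_nonneg[of \<alpha> f] unfolding M_def by (intro ereal_real'[symmetric]) auto
    have M0: "M \<ge> 0" using bloch_norm_nonneg[of \<alpha> f] Mf by simp
    show "Kop g f \<in> bloch0 \<alpha>"
    proof (rule in_bloch)
      show "f holomorphic_on ball 0 1" "f 0 = 0" using f by (auto simp: bloch0_def)
      show "M / \<beta> \<ge> 0" using M0 b by simp
      show "\<And>z. z \<in> ball 0 1 \<Longrightarrow> cmod (f z) \<le> M / \<beta> * (1 - cmod z) powr (- \<beta>)"
        using growth[OF f] Mf by simp
    qed
  next
    fix f1 f2 assume "f1 \<in> bloch0 \<alpha>" "f2 \<in> bloch0 \<alpha>"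
    then show "Kop g (\<lambda>z. f1 z + f2 z) = (\<lambda>z. Kop g f1 z + Kop g f2 z)"
      using Kop_lin(1)[OF g] by (simp add: bloch0_def)
  next
    fix f c assume "f \<in> bloch0 \<alpha>"
    then show "Kop g (\<lambda>z. c * f z) = (\<lambda>z. c * Kop g f z)"
      using Kop_lin(3)[OF g, of f f] by (simp add: bloch0_def)
  qed
  show ?thesis
    unfolding compact_op_def
  proof (intro conjI allI impI lin)
    fix F :: "nat \<Rightarrow> complex \<Rightarrow> complex"
    assume F: "\<forall>n. F n \<in> bloch0 \<alpha>" and "\<exists>M::real. \<forall>n. bloch_norm \<alpha> (F n) \<le> ereal M"
    then obtain M where M: "\<And>n. bloch_norm \<alpha> (F n) \<le> ereal M" by blast
    define M0 where "M0 = max M 0"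
    define C where "C = M0 / \<beta>"
    have C: "C \<ge> 0" using b by (simp add: C_def M0_def)
    have M0: "bloch_norm \<alpha> (F n) \<le> ereal M0" for n
      using M[of n] by (rule order_trans) (simp add: M0_def)
    have Fh: "\<And>n. F n holomorphic_on ball 0 1" and F0: "\<And>n. F n 0 = 0"
      using F by (auto simp: bloch0_def)
    have Fb: "\<And>n z. z \<in> ball 0 1 \<Longrightarrow> cmod (F n z) \<le> C * (1 - cmod z) powr (- \<beta>)"
      using growth F M0 by (simp add: C_def)
    define H where "H = {f. f holomorphic_on ball 0 1 \<and> (\<forall>z\<in>ball 0 1. cmod (f z) \<le> C * (1 - cmod z) powr (- \<beta>))}"
    obtain \<phi> r where \<phi>: "\<phi> holomorphic_on ball 0 1" and r: "strict_mono (r :: nat \<Rightarrow> nat)"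
      and pt: "\<And>x. x \<in> ball 0 1 \<Longrightarrow> ((\<lambda>n. F (r n) x) \<longlongrightarrow> \<phi> x) sequentially"
      and un: "\<And>K. \<lbrakk>compact K; K \<subseteq> ball 0 1\<rbrakk> \<Longrightarrow> uniform_limit K (F \<circ> r) \<phi> sequentially"
    proof (rule Montel[of "ball 0 1" H F])
      show "open (ball (0::complex) 1)" by simp
      show "\<And>h. h \<in> H \<Longrightarrow> h holomorphic_on ball 0 1" by (simp add: H_def)
      show "range F \<subseteq> H" using Fh Fb by (auto simp: H_def)
      fix K :: "complex set" assume K: "compact K" "K \<subseteq> ball 0 1"
      show "\<exists>B. \<forall>h\<in>H. \<forall>z\<in>K. cmod (h z) \<le> B"
      proof (cases "K = {}")
        case True then show ?thesis by simp
      next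
        case False
        obtain x where x: "x \<in> K" "\<And>y. y \<in> K \<Longrightarrow> cmod y \<le> cmod x"
          using continuous_attains_sup[OF K(1) False continuous_on_norm_id] by blast
        have x1: "cmod x < 1" using x K by auto
        show ?thesis
        proof (intro exI ballI)
          fix h z assume h: "h \<in> H" and z: "z \<in> K"
          have zD: "z \<in> ball 0 1" using z K by auto
          have "cmod (h z) \<le> C * (1 - cmod z) powr (- \<beta>)" using h zD by (simp add: H_def)
          also have "\<dots> \<le> C * (1 - cmod x) powr (- \<beta>)"
            using x(2)[OF z] x1 b C by (intro mult_left_mono powr_mono2') auto
          finally show "cmod (h z) \<le> C * (1 - cmod x) powr (- \<beta>)" .
        qed
      qed
    qed blast
    have \<phi>0: "\<phi> 0 = 0"
    proof -
      have "((\<lambda>n. F (r n) 0) \<longlongrightarrow> \<phi> 0) sequentially" using pt by simp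
      then show ?thesis using F0 by (simp add: LIMSEQ_const_iff)
    qed
    have \<phi>b: "cmod (\<phi> z) \<le> C * (1 - cmod z) powr (- \<beta>)" if z: "z \<in> ball 0 1" for z
    proof (rule tendsto_upperbound)
      show "((\<lambda>n. cmod (F (r n) z)) \<longlongrightarrow> cmod (\<phi> z)) sequentially"
        using pt[OF z] by (rule tendsto_norm)
      show "eventually (\<lambda>n. cmod (F (r n) z) \<le> C * (1 - cmod z) powr (- \<beta>)) sequentially"
        using Fb[OF z] by simp
    qed simp
    define d where "d = (\<lambda>n z. F (r n) z - \<phi> z)"
    have dh: "\<And>n. d n holomorphic_on ball 0 1" unfolding d_def using Fh \<phi> by (intro holomorphic_intros)
    have d0: "\<And>n. d n 0 = 0" using F0 \<phi>0 by (simp add: d_def)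
    have db: "cmod (d n z) \<le> (2 * C) * (1 - cmod z) powr (- \<beta>)" if z: "z \<in> ball 0 1" for n z
    proof -
      have "cmod (d n z) \<le> cmod (F (r n) z) + cmod (\<phi> z)" unfolding d_def by (rule norm_triangle_ineq4)
      also have "\<dots> \<le> C * (1 - cmod z) powr (- \<beta>) + C * (1 - cmod z) powr (- \<beta>)"
        using Fb[OF z] \<phi>b[OF z] by (rule add_mono)
      finally show ?thesis by simp
    qed
    have du: "eventually (\<lambda>n. \<forall>u\<in>cball 0 \<rho>. cmod (d n u) < \<eta>) sequentially"
      if "\<rho> < 1" "\<eta> > 0" for \<rho> \<eta>
    proof -
      have "cball 0 \<rho> \<subseteq> ball (0::complex) 1" using that by (auto simp: subset_iff)
      then have "uniform_limit (cball 0 \<rho>) (F \<circ> r) \<phi> sequentially" by (intro un) auto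
      from uniform_limitD[OF this \<open>\<eta> > 0\<close>]
      show ?thesis by eventually_elim (simp add: d_def dist_norm)
    qed
    have 2: "2 * C \<ge> 0" using C by simp
    show "\<exists>r g'. strict_mono r \<and> g' \<in> bloch0 \<alpha> \<and>
           ((\<lambda>n. bloch_norm \<alpha> (\<lambda>z. Kop g (F (r n)) z - g' z)) \<longlongrightarrow> 0) sequentially"
    proof (intro exI conjI)
      show "strict_mono r" by fact
      show "Kop g \<phi> \<in> bloch0 \<alpha>" by (rule in_bloch[OF \<phi> \<phi>0 C \<phi>b])
      have eq: "(\<lambda>z. Kop g (F (r n)) z - Kop g \<phi> z) = Kop g (d n)" for n
        unfolding d_def using Kop_lin(2)[OF g Fh F0 \<phi> \<phi>0] by simp
      show "((\<lambda>n. bloch_norm \<alpha> (\<lambda>z. Kop g (F (r n)) z - Kop g \<phi> z)) \<longlongrightarrow> 0) sequentially"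
        unfolding eq
      proof (rule ereal_tendsto0)
        show "\<And>n. 0 \<le> bloch_norm \<alpha> (Kop g (d n))" by (rule bloch_norm_nonneg)
        fix \<epsilon> :: real assume e: "\<epsilon> > 0"
        have ev: "eventually (\<lambda>n. \<forall>z\<in>ball 0 1. (1 - (cmod z)\<^sup>2) powr \<alpha> * cmod (qf g (d n) z) \<le> \<epsilon>) sequentially"
          by (rule Kop_conv[where g=g and d=d and C="2*C"]) (use a b 2 G gb dh d0 db du e in blast)+
        from ev show "eventually (\<lambda>n. bloch_norm \<alpha> (Kop g (d n)) \<le> ereal \<epsilon>) sequentially"
          by eventually_elim (rule bloch_Kop_le[OF g dh d0])
      qed
    qed
  qed
qed



lemma zero_bloch0: "(\<lambda>z. 0) \<in> bloch0 \<alpha> \<and> bloch_norm \<alpha> (\<lambda>z. 0) \<le> 1"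
proof -
  have h0: "bloch_norm \<alpha> (\<lambda>z. 0) \<le> ereal 0" unfolding bloch_le_iff by simp
  have h1: "bloch_norm \<alpha> (\<lambda>z. 0) \<le> 1" using h0 by (rule order_trans) simp
  have h2: "bloch_norm \<alpha> (\<lambda>z. 0) < \<infinity>" using h0 by (rule order.strict_trans1) simp
  show ?thesis using h1 h2 unfolding bloch0_def by simp
qed

theorem theorem4p2:
  fixes \<alpha> :: real and k :: nat and a :: "nat \<Rightarrow> complex" and h :: "complex \<Rightarrow> complex"
  assumes "\<alpha> > 0"
    and "k \<ge> 1"
    and "\<forall>j\<in>{1..k}. cmod (a j) > 0"
    and "h holomorphic_on ball 0 1"
    and "\<exists>B. \<forall>z\<in>ball 0 1. cmod (h z) \<le> B"
  shows "ess_norm \<alpha> (alexander_op (\<lambda>w. (\<Sum>j=1..k. a j) + h w)) = 0"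
proof -
  define c where "c = (\<Sum>j=1..k. a j)"
  define g where "g = (\<lambda>w. (\<Sum>j=1..k. a j) + h w)"
  obtain B where B: "\<And>z. z \<in> ball 0 1 \<Longrightarrow> cmod (h z) \<le> B" using assms(5) by blast
  define G where "G = cmod c + max B 0"
  have G: "G \<ge> 0" by (simp add: G_def)
  have gb: "cmod (g z) \<le> G" if "z \<in> ball 0 1" for z
  proof -
    have "cmod (g z) \<le> cmod c + cmod (h z)" unfolding g_def c_def by (rule norm_triangle_ineq)
    also have "\<dots> \<le> G" using B[OF that] by (simp add: G_def)
    finally show ?thesis .
  qed
  have gh: "g holomorphic_on ball 0 1" unfolding g_def using assms(4) by (intro holomorphic_intros)
  define \<beta> where "\<beta> = \<alpha> - min 1 \<alpha> / 2"
  have b: "\<beta> > 0" "\<beta> < \<alpha>" "\<alpha> \<le> \<beta> + 1" using assms(1) by (auto simp: \<beta>_def min_def)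
  have K: "compact_op \<alpha> (Kop g)" by (rule Kop_compact[OF assms(1) b G gh gb])
  have opn: "op_norm \<alpha> (\<lambda>f z. alexander_op g f z + Kop g f z) \<le> 0"
    unfolding op_norm_def
  proof (rule SUP_least)
    fix f
    have "bloch_norm \<alpha> (\<lambda>z. alexander_op g f z + Kop g f z) \<le> ereal 0"
      unfolding bloch_le_iff
    proof
      fix z :: complex assume z: "z \<in> ball 0 1"
      have "((\<lambda>z. alexander_op g f z + Kop g f z) has_field_derivative 0) (at z)"
      proof (rule has_field_derivative_transform_within_open[OF _ open_ball z])
        show "((\<lambda>z. 0) has_field_derivative 0) (at z)" by simp
        show "0 = alexander_op g f x + Kop g f x" if "x \<in> ball 0 1" for x
          using that by (simp add: Kop_def)
      qed
      then have "deriv (\<lambda>z. alexander_op g f z + Kop g f z) z = 0" by (rule DERIV_imp_deriv)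
      then show "(1 - (cmod z)\<^sup>2) powr \<alpha> * cmod (deriv (\<lambda>z. alexander_op g f z + Kop g f z) z) \<le> 0"
        by simp
    qed
    then show "bloch_norm \<alpha> (\<lambda>z. alexander_op g f z + Kop g f z) \<le> 0" by (simp add: zero_ereal_def)
  qed
  have le: "ess_norm \<alpha> (alexander_op g) \<le> 0"
  proof -
    have "Kop g \<in> {K. compact_op \<alpha> K}" using K by simp
    then have "ess_norm \<alpha> (alexander_op g) \<le> op_norm \<alpha> (\<lambda>f z. alexander_op g f z + Kop g f z)"
      unfolding ess_norm_def by (rule INF_lower)
    then show ?thesis using opn by (rule order_trans)
  qed
  have ge: "0 \<le> ess_norm \<alpha> (alexander_op g)"
    unfolding ess_norm_def
  proof (rule INF_greatest)
    fix K'
    show "0 \<le> op_norm \<alpha> (\<lambda>f z. alexander_op g f z + K' f z)"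
      unfolding op_norm_def
      by (rule SUP_upper2[where i="\<lambda>z. 0"]) (use zero_bloch0 bloch_norm_nonneg in auto)
  qed
  from le ge show ?thesis unfolding g_def by simp
qed


end
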